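(* Let $\mathbf L\in\mathbb R^{N\times N}$ be a Laplacian matrix (symmetric, off-diagonal entries $\le0$, $\mathbf L\mathbf 1_N=\mathbf 0$) with second-smallest eigenvalue $\rho_2>0$, and $\hat{\mathbf L}=\mathbf L\otimes\mathbf I_d$. Let $\mathbf A\in\mathbb R^{Nd\times Nd}$ be symmetric with all eigenvalues in $[\mu,L]$, $0<\mu\le L$, let $U>0$ and $\mathbf B=\mathbf A+U\hat{\mathbf L}$. Then for every $\mathbf v\in\mathbb R^{Nd}$ orthogonal to the column space of $\mathbf 1_N\otimes\mathbf I_d$ (i.e., $(\mathbf 1_N\otimes\mathbf I_d)^\top\mathbf v=\mathbf 0$), $$\|\mathbf B^{-1}\mathbf v\|\le\frac1U\cdot\frac{L}{\mu\rho_2}\|\mathbf v\|.$$ *)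

theory Defs
  imports "Jordan_Normal_Form.Jordan_Normal_Form" "Jordan_Normal_Form.Gauss_Jordan_Elimination"
begin

text \<open>Kronecker product with identity, using the index convention
  (i, a) \<mapsto> i * d + a (i < N, a < d).\<close>
definition kron_id :: "real mat \<Rightarrow> nat \<Rightarrow> real mat" where
  "kron_id M d = mat (dim_row M * d) (dim_col M * d)
     (\<lambda>(i, j). if i mod d = j mod d then M $$ (i div d, j div d) else 0)"

definition ones_kron_id :: "nat \<Rightarrow> nat \<Rightarrow> real mat" where
  "ones_kron_id N d = mat (N * d) d (\<lambda>(i, a). if i mod d = a then 1 else 0)"

definition laplacian_mat :: "nat \<Rightarrow> real mat \<Rightarrow> bool" where
  "laplacian_mat N M \<longleftrightarrow> M \<in> carrier_mat N N \<and> transpose_mat M = M \<and>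
     (\<forall>i<N. \<forall>j<N. i \<noteq> j \<longrightarrow> M $$ (i, j) \<le> 0) \<and>
     M *\<^sub>v (vec N (\<lambda>_. 1)) = 0\<^sub>v N"

definition sorted_eigenvalues :: "real mat \<Rightarrow> real list" where
  "sorted_eigenvalues M = sorted_list_of_multiset (proots (char_poly M))"

definition euclid_norm :: "real vec \<Rightarrow> real" where
  "euclid_norm v = sqrt (v \<bullet> v)"

end

theory Submission
  imports Defs "Jordan_Normal_Form.Schur_Decomposition"
begin


lemma sym_scalar: fixes A :: "real mat"
  assumes A: "A \<in> carrier_mat n n" and s: "transpose_mat A = A"
    and x: "x \<in> carrier_vec n" and y: "y \<in> carrier_vec n"
  shows "x \<bullet> (A *\<^sub>v y) = (A *\<^sub>v x) \<bullet> y"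
  using transpose_vec_mult_scalar[OF A y x] s by simp

lemma self_scalar_nonneg: fixes x :: "real vec" shows "0 \<le> x \<bullet> x"
  unfolding scalar_prod_def by (auto intro: sum_nonneg)

lemma self_scalar_zero: fixes x :: "real vec"
  assumes "x \<in> carrier_vec n" "x \<bullet> x = 0" shows "x = 0\<^sub>v n"
  using conjugate_square_eq_0_vec[OF assms(1)] assms(2) by simp

lemma sym_real_eigenvalue:
  fixes A :: "real mat"
  assumes A: "A \<in> carrier_mat n n" and s: "transpose_mat A = A" and n: "n > 0"
  shows "\<exists>e. eigenvalue A e"
proof -
  let ?Ac = "map_mat complex_of_real A"
  have Ac: "?Ac \<in> carrier_mat n n" using A by auto
  obtain as where cp: "char_poly ?Ac = (\<Prod>a\<leftarrow>as. [:-a,1:])" and len: "length as = n"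
    using char_poly_factorized[OF Ac] by blast
  define a where "a = hd as"
  have "a \<in> set as" using len n a_def by (cases as) auto
  hence "poly (char_poly ?Ac) a = 0" unfolding cp by (rule linear_poly_root)
  hence "eigenvalue ?Ac a" using eigenvalue_root_char_poly[OF Ac] by simp
  then obtain z where z: "z \<in> carrier_vec n" "z \<noteq> 0\<^sub>v n" "?Ac *\<^sub>v z = a \<cdot>\<^sub>v z"
    unfolding eigenvalue_def eigenvector_def using Ac by auto
  define x where "x = vec n (\<lambda>i. Re (z $ i))"
  define y where "y = vec n (\<lambda>i. Im (z $ i))"
  have x: "x \<in> carrier_vec n" and y: "y \<in> carrier_vec n" unfolding x_def y_def by auto
  have comp: "(?Ac *\<^sub>v z) $ i = (\<Sum>j<n. complex_of_real (A $$ (i,j)) * z $ j)" if i: "i < n" for i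
    using i A z(1) by (auto simp: scalar_prod_def row_def lessThan_atLeast0)
  have Ax: "A *\<^sub>v x = Re a \<cdot>\<^sub>v x - Im a \<cdot>\<^sub>v y"
  proof (rule eq_vecI)
    fix i assume i: "i < dim_vec (Re a \<cdot>\<^sub>v x - Im a \<cdot>\<^sub>v y)"
    hence i: "i < n" using x y by simp
    have "(A *\<^sub>v x) $ i = (\<Sum>j<n. A $$ (i,j) * Re (z $ j))"
      using i A x by (auto simp: scalar_prod_def row_def lessThan_atLeast0 x_def)
    also have "\<dots> = Re ((?Ac *\<^sub>v z) $ i)" unfolding comp[OF i] by (simp add: Re_sum)
    also have "\<dots> = Re a * Re (z $ i) - Im a * Im (z $ i)" using z(3) i z(1) by simp
    finally show "(A *\<^sub>v x) $ i = (Re a \<cdot>\<^sub>v x - Im a \<cdot>\<^sub>v y) $ i"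
      using i x y by (simp add: x_def y_def)
  qed (use A x y in auto)
  have Ay: "A *\<^sub>v y = Re a \<cdot>\<^sub>v y + Im a \<cdot>\<^sub>v x"
  proof (rule eq_vecI)
    fix i assume i: "i < dim_vec (Re a \<cdot>\<^sub>v y + Im a \<cdot>\<^sub>v x)"
    hence i: "i < n" using x y by simp
    have "(A *\<^sub>v y) $ i = (\<Sum>j<n. A $$ (i,j) * Im (z $ j))"
      using i A y by (auto simp: scalar_prod_def row_def lessThan_atLeast0 y_def)
    also have "\<dots> = Im ((?Ac *\<^sub>v z) $ i)" unfolding comp[OF i] by (simp add: Im_sum)
    also have "\<dots> = Re a * Im (z $ i) + Im a * Re (z $ i)" using z(3) i z(1) by simp
    finally show "(A *\<^sub>v y) $ i = (Re a \<cdot>\<^sub>v y + Im a \<cdot>\<^sub>v x) $ i"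
      using i x y by (simp add: x_def y_def)
  qed (use A x y in auto)
  have "x \<bullet> (A *\<^sub>v y) = (A *\<^sub>v x) \<bullet> y" by (rule sym_scalar[OF A s x y])
  hence "Re a * (x \<bullet> y) + Im a * (x \<bullet> x) = Re a * (x \<bullet> y) - Im a * (y \<bullet> y)"
    unfolding Ax Ay using x y
    by (simp add: scalar_prod_add_distrib scalar_prod_minus_distrib add_scalar_prod_distrib
        minus_scalar_prod_distrib comm_scalar_prod[of y n x])
  hence im: "Im a * (x \<bullet> x + y \<bullet> y) = 0" by (simp add: algebra_simps)
  have "x \<bullet> x + y \<bullet> y \<noteq> 0"
  proof
    assume h: "x \<bullet> x + y \<bullet> y = 0"
    have "x \<bullet> x = 0" "y \<bullet> y = 0" using h self_scalar_nonneg[of x] self_scalar_nonneg[of y] by linarith+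
    hence "x = 0\<^sub>v n" "y = 0\<^sub>v n" using self_scalar_zero x y by blast+
    hence "z = 0\<^sub>v n"
    proof (intro eq_vecI)
      fix i assume "i < dim_vec (0\<^sub>v n :: complex vec)"
      hence i: "i < n" by simp
      have "x $ i = 0" "y $ i = 0" using \<open>x = 0\<^sub>v n\<close> \<open>y = 0\<^sub>v n\<close> i by simp_all
      thus "z $ i = 0\<^sub>v n $ i" using i by (simp add: x_def y_def complex_eq_iff)
    qed (use z(1) in simp)
    thus False using z(2) by simp
  qed
  hence "Im a = 0" using im by simp
  hence aR: "a = complex_of_real (Re a)" by (simp add: complex_eq_iff)
  have "complex_of_real (poly (char_poly A) (Re a)) = poly (char_poly ?Ac) a"
    by (subst aR, subst of_real_hom.char_poly_hom[OF A], simp add: of_real_hom.poly_map_poly)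
  also have "\<dots> = 0" by fact
  finally have "poly (char_poly A) (Re a) = 0" by simp
  thus ?thesis using eigenvalue_root_char_poly[OF A] by blast
qed


lemma real_conj_vec[simp]: "conjugate (v :: real vec) = v"
  by (rule eq_vecI, auto)

lemma spectral:
  fixes A :: "real mat"
  assumes "A \<in> carrier_mat n n" "transpose_mat A = A"
  shows "\<exists>P D. similar_mat_wit A D P (transpose_mat P) \<and> diagonal_mat D"
  using assms
proof (induction n arbitrary: A)
  case 0
  have "similar_mat_wit A A (1\<^sub>m 0) (1\<^sub>m 0)" using similar_mat_wit_refl[OF 0(1)] .
  moreover have "diagonal_mat A" using 0(1) unfolding diagonal_mat_def by auto
  ultimately show ?case by (intro exI[of _ "1\<^sub>m 0"] exI[of _ A]) simp
next
  case (Suc m A)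
  define n where "n = Suc m"
  have A: "A \<in> carrier_mat n n" and sA: "transpose_mat A = A" using Suc n_def by auto
  obtain e where "eigenvalue A e" using sym_real_eigenvalue[OF A sA] n_def by auto
  then obtain v where v: "v \<in> carrier_vec n" "v \<noteq> 0\<^sub>v n" "A *\<^sub>v v = e \<cdot>\<^sub>v v"
    unfolding eigenvalue_def eigenvector_def using A by auto
  have vv: "v \<bullet> v > 0" using self_scalar_nonneg[of v] self_scalar_zero[OF v(1)] v(2)
    by force
  define u where "u = (1 / sqrt (v \<bullet> v)) \<cdot>\<^sub>v v"
  have u: "u \<in> carrier_vec n" unfolding u_def using v by auto
  have uu: "u \<bullet> u = 1" unfolding u_def using v(1) vv
    by (simp add: smult_scalar_prod_distrib scalar_prod_smult_distrib[of _ n])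
  have u0: "u \<noteq> 0\<^sub>v n" using uu u by auto
  have Au: "A *\<^sub>v u = e \<cdot>\<^sub>v u" unfolding u_def using v A
    by (simp add: mult_mat_vec smult_smult_assoc mult.commute)
  interpret cof_vec_space n "TYPE(real)" .
  define b where "b = basis_completion u"
  from basis_completion[OF u u0, folded b_def]
  have dist_b: "distinct b" and indep: "\<not> lin_dep (set b)" and b: "set b \<subseteq> carrier_vec n"
    and hdb: "hd b = u" and len_b: "length b = n" by auto
  from hdb len_b n_def obtain vs where bv: "b = u # vs" by (cases b, auto)
  define ws where "ws = gram_schmidt n b"
  from gram_schmidt_result[OF b dist_b indep refl, folded ws_def]
  have ws: "set ws \<subseteq> carrier_vec n" "corthogonal ws" "length ws = n"
    by (auto simp: len_b)
  from gram_schmidt_hd[OF u, of vs, folded bv] have hdws: "hd ws = u" unfolding ws_def .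
  have ws0: "ws ! 0 = u" using hdws ws(3) n_def by (cases ws) auto
  define ws' where "ws' = map (\<lambda>w. (1 / sqrt (w \<bullet> w)) \<cdot>\<^sub>v w) ws"
  have len': "length ws' = n" unfolding ws'_def using ws by simp
  have ws'c: "ws' ! i \<in> carrier_vec n" if "i < n" for i
    using that ws unfolding ws'_def by (auto simp: nth_mem subsetD)
  have ws'0: "ws' ! 0 = u" unfolding ws'_def using ws(3) n_def ws0 uu by simp
  have orth: "ws' ! i \<bullet> ws' ! j = (if i = j then 1 else 0)" if i: "i < n" and j: "j < n" for i j
  proof -
    have wi: "ws ! i \<in> carrier_vec n" and wj: "ws ! j \<in> carrier_vec n"
      using i j ws by (auto simp: nth_mem subsetD)
    have o: "(ws ! i \<bullet> ws ! j = 0) = (i \<noteq> j)" using corthogonalD[OF ws(2)] i j ws(3) by simp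
    have pos: "ws ! k \<bullet> ws ! k > 0" if "k < n" for k
      using corthogonalD[OF ws(2), of k k] that ws(3) self_scalar_nonneg[of "ws ! k"] by force
    have "ws' ! i \<bullet> ws' ! j = (1 / sqrt (ws ! i \<bullet> ws ! i)) * (1 / sqrt (ws ! j \<bullet> ws ! j)) * (ws ! i \<bullet> ws ! j)"
      unfolding ws'_def using i j ws(3) wi wj
      by (simp add: smult_scalar_prod_distrib scalar_prod_smult_distrib[of _ n])
    also have "\<dots> = (if i = j then 1 else 0)"
      using o pos[OF i] by (cases "i = j") (auto simp: real_sqrt_mult[symmetric])
    finally show ?thesis .
  qed
  define W where "W = mat_of_cols n ws'"
  have W: "W \<in> carrier_mat n n" unfolding W_def using mat_of_cols_carrier(1)[of n ws'] len' by simp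
  have colW: "col W i = ws' ! i" if "i < n" for i
    unfolding W_def using that len' ws'c by (simp add: col_mat_of_cols)
  have WtW: "transpose_mat W * W = 1\<^sub>m n"
  proof (rule eq_matI)
    fix i j assume "i < dim_row (1\<^sub>m n :: real mat)" "j < dim_col (1\<^sub>m n :: real mat)"
    hence i: "i < n" and j: "j < n" by auto
    show "(transpose_mat W * W) $$ (i, j) = 1\<^sub>m n $$ (i, j)"
      using i j W by (simp add: row_transpose colW orth)
  qed (use W in auto)
  have WWt: "W * transpose_mat W = 1\<^sub>m n"
    using mat_mult_left_right_inverse[OF _ W WtW] W by auto
  define A' where "A' = transpose_mat W * A * W"
  have A': "A' \<in> carrier_mat n n" unfolding A'_def using A W by auto
  have sA': "transpose_mat A' = A'" unfolding A'_def using A W sA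
    by (simp add: transpose_mult[of _ n n _ n] assoc_mult_mat[of _ n n _ n _ n])
  have A'col: "A' $$ (i, 0) = (if i = 0 then e else 0)" if i: "i < n" for i
  proof -
    have "A' $$ (i, 0) = col W i \<bullet> (A *\<^sub>v col W 0)"
      unfolding A'_def using i A W n_def
      by (simp add: assoc_mult_mat[of _ n n _ n _ n] row_transpose mult_mat_vec_def)
    also have "\<dots> = ws' ! i \<bullet> (e \<cdot>\<^sub>v u)" using colW i n_def ws'0 Au by simp
    also have "\<dots> = e * (ws' ! i \<bullet> ws' ! 0)" using ws'c[OF i] u ws'0
      by (simp add: scalar_prod_smult_distrib)
    also have "\<dots> = (if i = 0 then e else 0)" using orth[OF i, of 0] n_def by simp
    finally show ?thesis .
  qed
  have A'row: "A' $$ (0, j) = (if j = 0 then e else 0)" if j: "j < n" for j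
  proof -
    have "A' $$ (0, j) = transpose_mat A' $$ (j, 0)" using A' j n_def by simp
    thus ?thesis using sA' A'col[OF j] by simp
  qed
  define A3 where "A3 = mat m m (\<lambda>(i,j). A' $$ (Suc i, Suc j))"
  define A1 :: "real mat" where "A1 = mat 1 1 (\<lambda>_. e)"
  have A1: "A1 \<in> carrier_mat 1 1" unfolding A1_def by simp
  have A3: "A3 \<in> carrier_mat m m" unfolding A3_def by simp
  have sA3: "transpose_mat A3 = A3"
  proof (rule eq_matI)
    fix i j assume "i < dim_row A3" "j < dim_col A3"
    hence i: "i < m" and j: "j < m" using A3 by auto
    have "A' $$ (Suc j, Suc i) = transpose_mat A' $$ (Suc i, Suc j)" using A' i j n_def by simp
    thus "transpose_mat A3 $$ (i, j) = A3 $$ (i, j)" using sA' i j unfolding A3_def by simp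
  qed (use A3 in auto)
  have A'blk: "A' = four_block_mat A1 (0\<^sub>m 1 m) (0\<^sub>m m 1) A3"
  proof (rule eq_matI)
    fix i j assume "i < dim_row (four_block_mat A1 (0\<^sub>m 1 m) (0\<^sub>m m 1) A3)"
      "j < dim_col (four_block_mat A1 (0\<^sub>m 1 m) (0\<^sub>m m 1) A3)"
    hence i: "i < Suc m" and j: "j < Suc m" using A1 A3 by auto
    show "A' $$ (i, j) = four_block_mat A1 (0\<^sub>m 1 m) (0\<^sub>m m 1) A3 $$ (i, j)"
      using i j A1 A3 A'col A'row n_def
      by (cases i; cases j) (auto simp: A1_def A3_def)
  qed (use A' A1 A3 n_def in auto)
  from Suc.IH[OF A3 sA3] obtain P3 D3 where
    sim3: "similar_mat_wit A3 D3 P3 (transpose_mat P3)" and dD3: "diagonal_mat D3" by blast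
  from similar_mat_witD2[OF A3 sim3] have D3: "D3 \<in> carrier_mat m m" and P3: "P3 \<in> carrier_mat m m"
    by auto
  define P4 where "P4 = four_block_mat (1\<^sub>m 1) (0\<^sub>m 1 m) (0\<^sub>m m 1) P3"
  have P4c: "P4 \<in> carrier_mat n n" unfolding P4_def using P3 n_def
    using four_block_carrier_mat[OF one_carrier_mat[of 1] P3] by simp
  define D where "D = four_block_mat A1 (0\<^sub>m 1 m) (0\<^sub>m m 1) D3"
  have sim4: "similar_mat_wit A' D P4 (four_block_mat (1\<^sub>m 1) (0\<^sub>m 1 m) (0\<^sub>m m 1) (transpose_mat P3))"
    unfolding A'blk D_def P4_def
    by (rule similar_mat_wit_four_block[OF similar_mat_wit_refl[OF A1] sim3], insert A1 A3 P3, auto)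
  have tP4: "transpose_mat P4 = four_block_mat (1\<^sub>m 1) (0\<^sub>m 1 m) (0\<^sub>m m 1) (transpose_mat P3)"
    unfolding P4_def using P3 by (subst transpose_four_block_mat[of _ 1 1 _ m _ m], auto)
  have simW: "similar_mat_wit A A' W (transpose_mat W)"
  proof (rule similar_mat_witI[OF WWt WtW _ A A' W])
    have "W * A' * transpose_mat W = (W * transpose_mat W) * A * (W * transpose_mat W)"
      unfolding A'_def using A W by (simp add: assoc_mult_mat[of _ n n _ n _ n])
    thus "A = W * A' * transpose_mat W" using A WWt by simp
  qed (use W in auto)
  have "similar_mat_wit A D (W * P4) (transpose_mat P4 * transpose_mat W)"
    using similar_mat_wit_trans[OF simW sim4[folded tP4]] .
  moreover have "transpose_mat (W * P4) = transpose_mat P4 * transpose_mat W"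
    using transpose_mult[OF W P4c] .
  moreover have "diagonal_mat D"
    using dD3 D3 A1 unfolding diagonal_mat_def D_def by (auto simp: A1_def)
  ultimately show ?case by metis
qed


lemma diag_mult_vec: fixes D :: "real mat"
  assumes D: "D \<in> carrier_mat n n" and dD: "diagonal_mat D" and y: "y \<in> carrier_vec n"
  shows "D *\<^sub>v y = vec n (\<lambda>i. D $$ (i,i) * y $ i)"
proof (rule eq_vecI)
  fix i assume "i < dim_vec (vec n (\<lambda>i. D $$ (i,i) * y $ i))"
  hence i: "i < n" by simp
  have "(D *\<^sub>v y) $ i = (\<Sum>j\<in>{0..<n}. D $$ (i,j) * y $ j)"
    using i D y by (simp add: scalar_prod_def row_def)
  also have "\<dots> = (\<Sum>j\<in>{0..<n}. if j = i then D $$ (i,i) * y $ i else 0)"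
    by (rule sum.cong, insert dD D i, auto simp: diagonal_mat_def)
  also have "\<dots> = D $$ (i,i) * y $ i" using i by simp
  finally show "(D *\<^sub>v y) $ i = vec n (\<lambda>i. D $$ (i,i) * y $ i) $ i" using i by simp
qed (use D in simp)

lemma spec_quad: fixes A :: "real mat"
  assumes sim: "similar_mat_wit A D P (transpose_mat P)" and A: "A \<in> carrier_mat n n"
    and dD: "diagonal_mat D" and x: "x \<in> carrier_vec n"
  shows "x \<bullet> (A *\<^sub>v x) = (\<Sum>i<n. D $$ (i,i) * ((transpose_mat P *\<^sub>v x) $ i)^2)"
    "x \<bullet> x = (\<Sum>i<n. ((transpose_mat P *\<^sub>v x) $ i)^2)"
proof -
  note s = similar_mat_witD2[OF A sim]
  have D: "D \<in> carrier_mat n n" and P: "P \<in> carrier_mat n n" using s by auto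
  define y where "y = transpose_mat P *\<^sub>v x"
  have y: "y \<in> carrier_vec n" unfolding y_def using P x by simp
  have "A *\<^sub>v x = P *\<^sub>v (D *\<^sub>v y)" unfolding y_def
    using s(3) P D x by (simp add: assoc_mult_mat_vec[of _ n n _ n])
  hence "x \<bullet> (A *\<^sub>v x) = y \<bullet> (D *\<^sub>v y)"
    using transpose_vec_mult_scalar[OF P _ x, of "D *\<^sub>v y"] D y unfolding y_def by simp
  also have "\<dots> = (\<Sum>i<n. D $$ (i,i) * (y $ i)^2)"
    unfolding diag_mult_vec[OF D dD y] using y
    by (simp add: scalar_prod_def lessThan_atLeast0 power2_eq_square algebra_simps)
  finally show "x \<bullet> (A *\<^sub>v x) = (\<Sum>i<n. D $$ (i,i) * ((transpose_mat P *\<^sub>v x) $ i)^2)"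
    unfolding y_def .
  have "x = P *\<^sub>v y" unfolding y_def using s(1) P x by (simp add: assoc_mult_mat_vec[symmetric, of _ n n _ n])
  hence "x \<bullet> x = y \<bullet> y"
    using transpose_vec_mult_scalar[OF P y x] unfolding y_def by simp
  also have "\<dots> = (\<Sum>i<n. (y $ i)^2)" using y
    by (simp add: scalar_prod_def lessThan_atLeast0 power2_eq_square)
  finally show "x \<bullet> x = (\<Sum>i<n. ((transpose_mat P *\<^sub>v x) $ i)^2)" unfolding y_def .
qed

lemma spec_diag_eigen: fixes A :: "real mat"
  assumes sim: "similar_mat_wit A D P (transpose_mat P)" and A: "A \<in> carrier_mat n n"
    and dD: "diagonal_mat D" and i: "i < n"
  shows "eigenvalue A (D $$ (i,i))"
proof -
  note s = similar_mat_witD2[OF A sim]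
  have D: "D \<in> carrier_mat n n" and P: "P \<in> carrier_mat n n" using s by auto
  define u where "u = P *\<^sub>v unit_vec n i"
  have u: "u \<in> carrier_vec n" unfolding u_def using P by simp
  have Ptu: "transpose_mat P *\<^sub>v u = unit_vec n i" unfolding u_def
    using s(2) P by (simp add: assoc_mult_mat_vec[symmetric, of _ n n _ n])
  have u0: "u \<noteq> 0\<^sub>v n"
  proof
    assume "u = 0\<^sub>v n"
    hence "transpose_mat P *\<^sub>v u = 0\<^sub>v n" using P by (intro eq_vecI, auto simp: scalar_prod_def)
    thus False using Ptu i by (metis index_unit_vec(1) index_zero_vec(1) zero_neq_one)
  qed
  have Du: "D *\<^sub>v unit_vec n i = D $$ (i,i) \<cdot>\<^sub>v unit_vec n i"
    unfolding diag_mult_vec[OF D dD unit_vec_carrier] by (rule eq_vecI, auto simp: unit_vec_def)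
  have "A *\<^sub>v u = P *\<^sub>v (D *\<^sub>v (transpose_mat P *\<^sub>v u))"
    using s(3) P D u by (simp add: assoc_mult_mat_vec[of _ n n _ n])
  also have "\<dots> = P *\<^sub>v (D $$ (i,i) \<cdot>\<^sub>v unit_vec n i)" by (simp only: Ptu Du)
  also have "\<dots> = D $$ (i,i) \<cdot>\<^sub>v u" unfolding u_def using P by (simp add: mult_mat_vec)
  finally show ?thesis unfolding eigenvalue_def eigenvector_def using u u0 A by auto
qed

lemma quad_bounds: fixes A :: "real mat"
  assumes A: "A \<in> carrier_mat n n" and sA: "transpose_mat A = A"
    and ev: "\<And>ev. eigenvalue A ev \<Longrightarrow> lo \<le> ev \<and> ev \<le> hi"
    and x: "x \<in> carrier_vec n"
  shows "lo * (x \<bullet> x) \<le> x \<bullet> (A *\<^sub>v x)" "x \<bullet> (A *\<^sub>v x) \<le> hi * (x \<bullet> x)"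
proof -
  obtain P D where sim: "similar_mat_wit A D P (transpose_mat P)" and dD: "diagonal_mat D"
    using spectral[OF A sA] by blast
  define y where "y = transpose_mat P *\<^sub>v x"
  note q = spec_quad[OF sim A dD x, folded y_def]
  have b: "lo \<le> D $$ (i,i) \<and> D $$ (i,i) \<le> hi" if "i < n" for i
    using ev[OF spec_diag_eigen[OF sim A dD that]] .
  have "lo * (x \<bullet> x) = (\<Sum>i<n. lo * (y $ i)^2)" unfolding q by (simp add: sum_distrib_left)
  also have "\<dots> \<le> (\<Sum>i<n. D $$ (i,i) * (y $ i)^2)"
    by (rule sum_mono, rule mult_right_mono, insert b, auto)
  finally show "lo * (x \<bullet> x) \<le> x \<bullet> (A *\<^sub>v x)" unfolding q .
  have "(\<Sum>i<n. D $$ (i,i) * (y $ i)^2) \<le> (\<Sum>i<n. hi * (y $ i)^2)"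
    by (rule sum_mono, rule mult_right_mono, insert b, auto)
  also have "\<dots> = hi * (x \<bullet> x)" unfolding q by (simp add: sum_distrib_left)
  finally show "x \<bullet> (A *\<^sub>v x) \<le> hi * (x \<bullet> x)" unfolding q .
qed



lemma sorted_card: fixes l :: "real list"
  assumes "2 \<le> length l"
  shows "card {i. i < length l \<and> l ! i < sort l ! 1} \<le> 1"
proof -
  define t where "t = sort l ! 1"
  have "card {i. i < length l \<and> l ! i < t} = length (filter (\<lambda>x. x < t) l)"
    by (simp add: length_filter_conv_card)
  also have "\<dots> = size (filter_mset (\<lambda>x. x < t) (mset l))" by (metis mset_filter size_mset)
  also have "\<dots> = length (filter (\<lambda>x. x < t) (sort l))" by (metis mset_filter size_mset mset_sort)
  also have "\<dots> \<le> 1"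
  proof -
    have len: "2 \<le> length (sort l)" using assms by simp
    then obtain a b r where s: "sort l = a # b # r" by (cases "sort l"; cases "tl (sort l)") auto
    have srt: "sorted (a # b # r)" using sorted_sort[of l] unfolding s .
    have tb: "t = b" unfolding t_def s by simp
    have "filter (\<lambda>x. x < t) (b # r) = []" using srt unfolding tb by (auto simp: filter_empty_conv)
    thus ?thesis unfolding s by simp
  qed
  finally show ?thesis unfolding t_def .
qed

lemma proots_lin_prod: "proots (\<Prod>a\<leftarrow>l. [:- a, 1:]) = mset (l :: real list)"
proof (induction l)
  case (Cons a l)
  have "proots (\<Prod>a\<leftarrow>a # l. [:- a, 1:]) = proots ([:- a, 1:] * (\<Prod>a\<leftarrow>l. [:- a, 1:]))" by simp
  also have "\<dots> = proots [:- a, 1:] + proots (\<Prod>a\<leftarrow>l. [:- a, 1:])"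
    by (rule proots_mult, auto simp: prod_list_zero_iff)
  finally show ?case using Cons by (simp add: proots_linear_factor)
qed simp

lemma lap_bounds: fixes Lap :: "real mat"
  assumes lap: "laplacian_mat N Lap" and N: "2 \<le> N"
    and r: "\<rho>2 = sorted_eigenvalues Lap ! 1" and r0: "\<rho>2 > 0"
  shows "\<And>x. x \<in> carrier_vec N \<Longrightarrow> 0 \<le> x \<bullet> (Lap *\<^sub>v x)"
    "\<And>x. x \<in> carrier_vec N \<Longrightarrow> x \<bullet> vec N (\<lambda>_. 1) = 0 \<Longrightarrow> \<rho>2 * (x \<bullet> x) \<le> x \<bullet> (Lap *\<^sub>v x)"
proof -
  have L: "Lap \<in> carrier_mat N N" and sL: "transpose_mat Lap = Lap"
    and L1: "Lap *\<^sub>v vec N (\<lambda>_. 1) = 0\<^sub>v N" using lap unfolding laplacian_mat_def by auto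
  obtain P D where sim: "similar_mat_wit Lap D P (transpose_mat P)" and dD: "diagonal_mat D"
    using spectral[OF L sL] by blast
  note s = similar_mat_witD2[OF L sim]
  have D: "D \<in> carrier_mat N N" and P: "P \<in> carrier_mat N N" using s by auto
  have ut: "upper_triangular D" using dD D unfolding diagonal_mat_def upper_triangular_def by auto
  have "char_poly Lap = char_poly D"
    by (rule char_poly_similar, unfold similar_mat_def, use sim in blast)
  also have "\<dots> = (\<Prod>a\<leftarrow>diag_mat D. [:- a, 1:])" using char_poly_upper_triangular[OF D ut] .
  finally have "sorted_eigenvalues Lap = sort (diag_mat D)"
    unfolding sorted_eigenvalues_def by (simp add: proots_lin_prod sorted_list_of_multiset_mset)
  hence r': "\<rho>2 = sort (diag_mat D) ! 1" using r by simp
  have ld: "length (diag_mat D) = N" and dn: "\<And>i. i < N \<Longrightarrow> diag_mat D ! i = D $$ (i,i)"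
    using D by (auto simp: diag_mat_def)
  have card: "card {i. i < N \<and> D $$ (i,i) < \<rho>2} \<le> 1"
    using sorted_card[of "diag_mat D"] ld N dn r'
    by (smt (verit, best) Collect_cong)
  define ones :: "real vec" where "ones = vec N (\<lambda>_. 1)"
  have ones: "ones \<in> carrier_vec N" unfolding ones_def by simp
  define z where "z = transpose_mat P *\<^sub>v ones"
  have z: "z \<in> carrier_vec N" unfolding z_def using P ones by simp
  have Pz: "P *\<^sub>v z = ones" unfolding z_def using s(1) P ones
    by (simp add: assoc_mult_mat_vec[symmetric, of _ N N _ N])
  have "D *\<^sub>v z = transpose_mat P *\<^sub>v (Lap *\<^sub>v ones)"
  proof -
    have "transpose_mat P *\<^sub>v (Lap *\<^sub>v ones) = (transpose_mat P * P) *\<^sub>v (D *\<^sub>v z)"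
      using s(3) P D ones unfolding z_def by (simp add: assoc_mult_mat_vec[of _ N N _ N])
    thus ?thesis using s(2) D z by simp
  qed
  also have "\<dots> = 0\<^sub>v N" using L1 P unfolding ones_def by (intro eq_vecI, auto simp: scalar_prod_def)
  finally have Dz: "D *\<^sub>v z = 0\<^sub>v N" .
  have Dzi: "D $$ (i,i) * z $ i = 0" if "i < N" for i
    using arg_cong[OF Dz, of "\<lambda>v. v $ i"] that unfolding diag_mult_vec[OF D dD z] by simp
  have z0: "z \<noteq> 0\<^sub>v N"
  proof
    assume "z = 0\<^sub>v N"
    hence "ones = P *\<^sub>v 0\<^sub>v N" using Pz by simp
    also have "\<dots> = 0\<^sub>v N" using P by (intro eq_vecI, auto simp: scalar_prod_def)
    finally have "ones $ 0 = 0\<^sub>v N $ 0" by simp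
    thus False using N unfolding ones_def by simp
  qed
  have key: "\<rho>2 \<le> D $$ (i,i) \<or> (D $$ (i,i) = 0 \<and> (\<forall>x\<in>carrier_vec N. x \<bullet> ones = 0 \<longrightarrow> (transpose_mat P *\<^sub>v x) $ i = 0))"
    if i: "i < N" for i
  proof (cases "\<rho>2 \<le> D $$ (i,i)")
    case False
    have oth: "\<rho>2 \<le> D $$ (j,j)" if j: "j < N" "j \<noteq> i" for j
    proof (rule ccontr)
      assume "\<not> \<rho>2 \<le> D $$ (j,j)"
      hence "{i, j} \<subseteq> {i. i < N \<and> D $$ (i,i) < \<rho>2}" using False i j by auto
      from card_mono[OF _ this] card j show False by auto
    qed
    have zj: "z $ j = 0" if "j < N" "j \<noteq> i" for j using Dzi[of j] oth[OF that] r0 that by auto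
    have zi: "z $ i \<noteq> 0"
    proof
      assume "z $ i = 0"
      hence "z = 0\<^sub>v N" using zj z by (intro eq_vecI) auto
      thus False using z0 by simp
    qed
    have Di: "D $$ (i,i) = 0" using Dzi[OF i] zi by simp
    have "(transpose_mat P *\<^sub>v x) $ i = 0" if x: "x \<in> carrier_vec N" "x \<bullet> ones = 0" for x
    proof -
      define y where "y = transpose_mat P *\<^sub>v x"
      have y: "y \<in> carrier_vec N" unfolding y_def using P x by simp
      have "y \<bullet> z = x \<bullet> (P *\<^sub>v z)" unfolding y_def using transpose_vec_mult_scalar[OF P z x(1)] .
      hence "y \<bullet> z = 0" using Pz x by simp
      moreover have "y \<bullet> z = (\<Sum>j\<in>{0..<N}. y $ j * z $ j)" using z by (simp add: scalar_prod_def)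
      moreover have "\<dots> = y $ i * z $ i"
        by (subst sum.remove[of _ i], insert i zj, auto intro!: sum.neutral)
      ultimately show ?thesis using zi unfolding y_def by simp
    qed
    thus ?thesis using Di by blast
  qed simp
  fix x :: "real vec" assume x: "x \<in> carrier_vec N"
  define y where "y = transpose_mat P *\<^sub>v x"
  note q = spec_quad[OF sim L dD x, folded y_def]
  have "0 \<le> D $$ (i,i)" if "i < N" for i using key[OF that] r0 by auto
  thus "0 \<le> x \<bullet> (Lap *\<^sub>v x)" unfolding q by (intro sum_nonneg) auto
  assume xo: "x \<bullet> vec N (\<lambda>_. 1) = 0"
  have "\<rho>2 * (y $ i)^2 \<le> D $$ (i,i) * (y $ i)^2" if i: "i < N" for i
    using key[OF i] xo x unfolding ones_def y_def by (auto intro: mult_right_mono)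
  hence "(\<Sum>i<N. \<rho>2 * (y $ i)^2) \<le> (\<Sum>i<N. D $$ (i,i) * (y $ i)^2)" by (intro sum_mono) auto
  thus "\<rho>2 * (x \<bullet> x) \<le> x \<bullet> (Lap *\<^sub>v x)" unfolding q by (simp add: sum_distrib_left)
qed



lemma sum_shift_add: "(\<Sum>k<m+(d::nat). f k) = (\<Sum>k<m. f k) + (\<Sum>a<d. f (m+a))"
  by (induction d) (auto simp: add_ac)

lemma sum_nd: "(\<Sum>k<(N::nat)*d. f k) = (\<Sum>i<N. \<Sum>a<d. f (i*d+a))"
proof (induction N)
  case (Suc N)
  have "(\<Sum>k<Suc N * d. f k) = (\<Sum>k<N*d + d. f k)" by (simp add: add.commute)
  also have "\<dots> = (\<Sum>k<N*d. f k) + (\<Sum>a<d. f (N*d+a))" by (rule sum_shift_add)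
  finally show ?case using Suc by simp
qed simp

lemma idx_lt: assumes "i < (N::nat)" "a < d" shows "i*d + a < N*d"
proof -
  have "i*d + a < i*d + d" using assms by simp
  also have "\<dots> = Suc i * d" by simp
  also have "\<dots> \<le> N * d" using assms by (intro mult_right_mono) auto
  finally show ?thesis .
qed

lemma idx_div_mod: assumes "a < (d::nat)" shows "(i*d + a) div d = i" "(i*d + a) mod d = a"
  using assms by auto

definition slice :: "nat \<Rightarrow> nat \<Rightarrow> real vec \<Rightarrow> nat \<Rightarrow> real vec" where
  "slice N d x a = vec N (\<lambda>i. x $ (i*d + a))"

lemma slice_carrier[simp]: "slice N d x a \<in> carrier_vec N" unfolding slice_def by simp

lemma scalar_slices: assumes x: "x \<in> carrier_vec (N*d)" and y: "y \<in> carrier_vec (N*d)"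
  shows "x \<bullet> y = (\<Sum>a<d. slice N d x a \<bullet> slice N d y a)"
proof -
  have "x \<bullet> y = (\<Sum>k<N*d. x $ k * y $ k)" using y by (simp add: scalar_prod_def lessThan_atLeast0)
  also have "\<dots> = (\<Sum>i<N. \<Sum>a<d. x $ (i*d+a) * y $ (i*d+a))" by (rule sum_nd)
  also have "\<dots> = (\<Sum>a<d. \<Sum>i<N. x $ (i*d+a) * y $ (i*d+a))" by (rule sum.swap)
  also have "\<dots> = (\<Sum>a<d. slice N d x a \<bullet> slice N d y a)"
    by (simp add: slice_def scalar_prod_def lessThan_atLeast0)
  finally show ?thesis .
qed

lemma kron_carrier: assumes "M \<in> carrier_mat N N" shows "kron_id M d \<in> carrier_mat (N*d) (N*d)"
  using assms unfolding kron_id_def by auto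

lemma kron_slice: assumes L: "Lap \<in> carrier_mat N N" and y: "y \<in> carrier_vec (N*d)" and a: "a < d"
  shows "slice N d (kron_id Lap d *\<^sub>v y) a = Lap *\<^sub>v slice N d y a"
proof (rule eq_vecI)
  fix i assume "i < dim_vec (Lap *\<^sub>v slice N d y a)"
  hence i: "i < N" using L by simp
  have K: "kron_id Lap d \<in> carrier_mat (N*d) (N*d)" by (rule kron_carrier[OF L])
  have "(kron_id Lap d *\<^sub>v y) $ (i*d+a) = (\<Sum>k<N*d. kron_id Lap d $$ (i*d+a, k) * y $ k)"
    using K y idx_lt[OF i a] by (simp add: scalar_prod_def lessThan_atLeast0 row_def)
  also have "\<dots> = (\<Sum>j<N. \<Sum>b<d. kron_id Lap d $$ (i*d+a, j*d+b) * y $ (j*d+b))" by (rule sum_nd)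
  also have "\<dots> = (\<Sum>j<N. \<Sum>b<d. if b = a then Lap $$ (i, j) * y $ (j*d+a) else 0)"
    by (intro sum.cong refl, insert L i a idx_lt[OF i a], auto simp: kron_id_def idx_lt)
  also have "\<dots> = (\<Sum>j<N. Lap $$ (i, j) * y $ (j*d+a))" using a by simp
  also have "\<dots> = (Lap *\<^sub>v slice N d y a) $ i"
    using L i by (simp add: scalar_prod_def lessThan_atLeast0 row_def slice_def)
  finally show "slice N d (kron_id Lap d *\<^sub>v y) a $ i = (Lap *\<^sub>v slice N d y a) $ i"
    using i by (simp add: slice_def)
qed (use L in simp)

lemma kron_quad: assumes L: "Lap \<in> carrier_mat N N" and x: "x \<in> carrier_vec (N*d)" and y: "y \<in> carrier_vec (N*d)"
  shows "x \<bullet> (kron_id Lap d *\<^sub>v y) = (\<Sum>a<d. slice N d x a \<bullet> (Lap *\<^sub>v slice N d y a))"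
proof -
  have K: "kron_id Lap d \<in> carrier_mat (N*d) (N*d)" by (rule kron_carrier[OF L])
  show ?thesis unfolding scalar_slices[OF x mult_mat_vec_carrier[OF K y]]
    by (rule sum.cong, insert kron_slice[OF L y], auto)
qed

lemma ones_slice: assumes v: "v \<in> carrier_vec (N*d)" and a: "a < d"
  shows "(transpose_mat (ones_kron_id N d) *\<^sub>v v) $ a = slice N d v a \<bullet> vec N (\<lambda>_. 1)"
proof -
  have "(transpose_mat (ones_kron_id N d) *\<^sub>v v) $ a = (\<Sum>k<N*d. (if k mod d = a then 1 else 0) * v $ k)"
    using v a by (simp add: ones_kron_id_def scalar_prod_def lessThan_atLeast0 row_def)
  also have "\<dots> = (\<Sum>i<N. \<Sum>b<d. (if (i*d+b) mod d = a then 1 else 0) * v $ (i*d+b))" by (rule sum_nd)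
  also have "\<dots> = (\<Sum>i<N. \<Sum>b<d. if b = a then v $ (i*d+a) else 0)"
    by (intro sum.cong refl, auto)
  also have "\<dots> = (\<Sum>i<N. v $ (i*d+a))" using a by simp
  also have "\<dots> = slice N d v a \<bullet> vec N (\<lambda>_. 1)"
    by (simp add: slice_def scalar_prod_def lessThan_atLeast0)
  finally show ?thesis .
qed

lemma kron_sym: assumes L: "Lap \<in> carrier_mat N N" and s: "transpose_mat Lap = Lap"
  shows "transpose_mat (kron_id Lap d) = kron_id Lap d"
proof (rule eq_matI)
  fix i j assume ij: "i < dim_row (kron_id Lap d)" "j < dim_col (kron_id Lap d)"
  hence "i < N*d" "j < N*d" using L by (auto simp: kron_id_def)
  hence "i div d < N" "j div d < N" by (auto simp: less_mult_imp_div_less)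
  hence "Lap $$ (j div d, i div d) = transpose_mat Lap $$ (i div d, j div d)" using L by simp
  thus "transpose_mat (kron_id Lap d) $$ (i, j) = kron_id Lap d $$ (i, j)"
    using ij s L by (auto simp: kron_id_def)
qed (use L in \<open>auto simp: kron_id_def\<close>)

lemma smult_mat_vec: assumes "M \<in> carrier_mat n n" "x \<in> carrier_vec n"
  shows "(c \<cdot>\<^sub>m M) *\<^sub>v x = c \<cdot>\<^sub>v (M *\<^sub>v x)"
  by (rule eq_vecI, insert assms, auto simp: scalar_prod_def sum_distrib_left ac_simps)



theorem lemma4:
  fixes N d :: nat and Lap A :: "real mat" and \<mu> Lmax U \<rho>2 :: real and v :: "real vec"
  assumes "2 \<le> N"
    and "laplacian_mat N Lap"
    and "\<rho>2 = sorted_eigenvalues Lap ! 1"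
    and "\<rho>2 > 0"
    and "A \<in> carrier_mat (N * d) (N * d)"
    and "transpose_mat A = A"
    and "\<And>ev. eigenvalue A ev \<Longrightarrow> \<mu> \<le> ev \<and> ev \<le> Lmax"
    and "0 < \<mu>" and "\<mu> \<le> Lmax"
    and "U > 0"
    and "v \<in> carrier_vec (N * d)"
    and "transpose_mat (ones_kron_id N d) *\<^sub>v v = 0\<^sub>v d"
  shows "euclid_norm (the (mat_inverse (A + U \<cdot>\<^sub>m kron_id Lap d)) *\<^sub>v v)
           \<le> (1 / U) * (Lmax / (\<mu> * \<rho>2)) * euclid_norm v"
proof -
  note N = assms(1) and r = assms(3) and r0 = assms(4) and A = assms(5) and sA = assms(6)
    and mu = assms(8) and muL = assms(9) and U = assms(10) and v = assms(11) and vo = assms(12)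
  have L: "Lap \<in> carrier_mat N N" and sL: "transpose_mat Lap = Lap"
    and L1: "Lap *\<^sub>v vec N (\<lambda>_. 1) = 0\<^sub>v N" using assms(2) unfolding laplacian_mat_def by auto
  note lb = lap_bounds[OF assms(2) N r r0]
  define K where "K = kron_id Lap d"
  have K: "K \<in> carrier_mat (N*d) (N*d)" unfolding K_def by (rule kron_carrier[OF L])
  have sK: "transpose_mat K = K" unfolding K_def by (rule kron_sym[OF L sL])
  define B where "B = A + U \<cdot>\<^sub>m K"
  have B: "B \<in> carrier_mat (N*d) (N*d)" unfolding B_def using A K by simp
  have Bx: "B *\<^sub>v x = A *\<^sub>v x + U \<cdot>\<^sub>v (K *\<^sub>v x)" if x: "x \<in> carrier_vec (N*d)" for x
    unfolding B_def using A K x by (simp add: add_mult_distrib_mat_vec[of _ "N*d" "N*d"] smult_mat_vec)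
  have K0: "0 \<le> x \<bullet> (K *\<^sub>v x)" if x: "x \<in> carrier_vec (N*d)" for x
    unfolding K_def kron_quad[OF L x x] by (intro sum_nonneg, rule lb(1), simp)
  have K1: "\<rho>2 * (x \<bullet> x) \<le> x \<bullet> (K *\<^sub>v x)"
    if x: "x \<in> carrier_vec (N*d)" and xo: "\<And>a. a < d \<Longrightarrow> slice N d x a \<bullet> vec N (\<lambda>_. 1) = 0" for x
  proof -
    have "\<rho>2 * (x \<bullet> x) = (\<Sum>a<d. \<rho>2 * (slice N d x a \<bullet> slice N d x a))"
      unfolding scalar_slices[OF x x] by (simp add: sum_distrib_left)
    also have "\<dots> \<le> (\<Sum>a<d. slice N d x a \<bullet> (Lap *\<^sub>v slice N d x a))"
      by (intro sum_mono lb(2), auto intro: xo)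
    finally show ?thesis unfolding K_def kron_quad[OF L x x] .
  qed
  have Aq1: "\<mu> * (x \<bullet> x) \<le> x \<bullet> (A *\<^sub>v x)" if x: "x \<in> carrier_vec (N*d)" for x
    using quad_bounds(1)[of A "N*d" \<mu> Lmax x] A sA assms(7) x by blast
  have Aq2: "x \<bullet> (A *\<^sub>v x) \<le> Lmax * (x \<bullet> x)" if x: "x \<in> carrier_vec (N*d)" for x
    using quad_bounds(2)[of A "N*d" \<mu> Lmax x] A sA assms(7) x by blast
  have symA: "x \<bullet> (A *\<^sub>v y) = (A *\<^sub>v x) \<bullet> y" if "x \<in> carrier_vec (N*d)" "y \<in> carrier_vec (N*d)" for x y
    using sym_scalar[OF A sA that] .
  have symK: "x \<bullet> (K *\<^sub>v y) = (K *\<^sub>v x) \<bullet> y" if "x \<in> carrier_vec (N*d)" "y \<in> carrier_vec (N*d)" for x y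
    using sym_scalar[OF K sK that] .
  have detB: "det B \<noteq> 0"
  proof
    assume "det B = 0"
    then obtain x where x: "x \<in> carrier_vec (N*d)" "x \<noteq> 0\<^sub>v (N*d)" "B *\<^sub>v x = 0\<^sub>v (N*d)"
      using det_0_iff_vec_prod_zero[OF B] by blast
    have "x \<bullet> (B *\<^sub>v x) = x \<bullet> (A *\<^sub>v x) + U * (x \<bullet> (K *\<^sub>v x))"
      unfolding Bx[OF x(1)] using x(1) A K by (simp add: scalar_prod_add_distrib[of _ "N*d"])
    moreover have "x \<bullet> (B *\<^sub>v x) = 0" using x by simp
    moreover have "0 \<le> U * (x \<bullet> (K *\<^sub>v x))" using K0[OF x(1)] U by simp
    ultimately have "\<mu> * (x \<bullet> x) \<le> 0" using Aq1[OF x(1)] by linarith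
    hence "x \<bullet> x = 0" using mu self_scalar_nonneg[of x]
      by (simp add: mult_le_0_iff)
    thus False using self_scalar_zero[OF x(1)] x(2) by simp
  qed
  obtain Binv where inv: "mat_inverse B = Some Binv"
  proof (cases "mat_inverse B")
    case None
    have "B \<notin> Units (ring_mat TYPE(real) (N*d) ())" by (rule mat_inverse(1)[OF B None])
    moreover have "B \<in> Units (ring_mat TYPE(real) (N*d) ())" by (rule det_non_zero_imp_unit[OF B detB])
    ultimately show ?thesis by blast
  qed
  from mat_inverse(2)[OF B inv] have BBi: "B * Binv = 1\<^sub>m (N*d)" and Bi: "Binv \<in> carrier_mat (N*d) (N*d)"
    by auto
  define w where "w = Binv *\<^sub>v v"
  have w: "w \<in> carrier_vec (N*d)" unfolding w_def using Bi v by simp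
  have Bw: "B *\<^sub>v w = v" unfolding w_def using BBi B Bi v
    by (simp add: assoc_mult_mat_vec[symmetric, of _ "N*d" "N*d" _ "N*d"])
  define ones :: "real vec" where "ones = vec N (\<lambda>_. 1)"
  have ones: "ones \<in> carrier_vec N" unfolding ones_def by simp
  define m where "m a = (1 / real N) * (slice N d w a \<bullet> ones)" for a
  define c where "c = vec (N*d) (\<lambda>k. m (k mod d))"
  have c: "c \<in> carrier_vec (N*d)" unfolding c_def by simp
  have slc: "slice N d c a = m a \<cdot>\<^sub>v ones" if a: "a < d" for a
    by (rule eq_vecI, insert a idx_lt[of _ N a d], auto simp: slice_def c_def ones_def)
  define p where "p = w - c"
  have p: "p \<in> carrier_vec (N*d)" unfolding p_def using w c by simp
  have wpc: "w = p + c" unfolding p_def using w c by (intro eq_vecI, auto)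
  have oo: "ones \<bullet> ones = real N" unfolding ones_def by (simp add: scalar_prod_def)
  have slp: "slice N d p a \<bullet> ones = 0" if a: "a < d" for a
  proof -
    have "slice N d p a = slice N d w a - slice N d c a"
      unfolding p_def using w c a idx_lt[of _ N a d] by (intro eq_vecI, auto simp: slice_def)
    hence "slice N d p a \<bullet> ones = slice N d w a \<bullet> ones - m a * (ones \<bullet> ones)"
      unfolding slc[OF a] using ones by (simp add: minus_scalar_prod_distrib[of _ N])
    also have "\<dots> = 0" unfolding oo m_def using N by simp
    finally show ?thesis .
  qed
  have Kc: "K *\<^sub>v c = 0\<^sub>v (N*d)"
  proof -
    have z: "x \<bullet> (K *\<^sub>v c) = 0" if x: "x \<in> carrier_vec (N*d)" for x
    proof -
      have "x \<bullet> (K *\<^sub>v c) = (\<Sum>a<d. slice N d x a \<bullet> (Lap *\<^sub>v slice N d c a))"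
        unfolding K_def by (rule kron_quad[OF L x c])
      also have "\<dots> = 0"
      proof (intro sum.neutral ballI)
        fix a assume "a \<in> {..<d}"
        hence a: "a < d" by simp
        have "Lap *\<^sub>v slice N d c a = m a \<cdot>\<^sub>v (Lap *\<^sub>v ones)" unfolding slc[OF a]
          using L ones by (simp add: mult_mat_vec)
        also have "\<dots> = 0\<^sub>v N" using L1 unfolding ones_def by (intro eq_vecI, auto)
        finally show "slice N d x a \<bullet> (Lap *\<^sub>v slice N d c a) = 0" by simp
      qed
      finally show ?thesis .
    qed
    have Kcc: "K *\<^sub>v c \<in> carrier_vec (N*d)" using K c by simp
    from z[OF Kcc] show ?thesis using self_scalar_zero[OF Kcc] by simp
  qed
  have vc: "v \<bullet> c = 0"
  proof -
    have "v \<bullet> c = (\<Sum>a<d. slice N d v a \<bullet> slice N d c a)" by (rule scalar_slices[OF v c])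
    also have "\<dots> = 0"
    proof (intro sum.neutral ballI)
      fix a assume "a \<in> {..<d}"
      hence a: "a < d" by simp
      have "slice N d v a \<bullet> ones = 0"
        using ones_slice[OF v a] arg_cong[OF vo, of "\<lambda>x. x $ a"] a unfolding ones_def by simp
      thus "slice N d v a \<bullet> slice N d c a = 0" unfolding slc[OF a] using ones by simp
    qed
    finally show ?thesis .
  qed
  have cKx: "c \<bullet> (K *\<^sub>v x) = 0" if x: "x \<in> carrier_vec (N*d)" for x
    using symK[OF c x] Kc x by simp
  have Kw: "K *\<^sub>v w = K *\<^sub>v p" unfolding wpc using K p c Kc
    by (simp add: mult_add_distrib_mat_vec[of _ "N*d" "N*d"])
  have e1: "v \<bullet> w = w \<bullet> (A *\<^sub>v w) + U * (w \<bullet> (K *\<^sub>v w))"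
  proof -
    have "v \<bullet> w = w \<bullet> (B *\<^sub>v w)" unfolding Bw using comm_scalar_prod[OF v w] .
    thus ?thesis unfolding Bx[OF w] using w A K by (simp add: scalar_prod_add_distrib[of _ "N*d"])
  qed
  have e2: "w \<bullet> (K *\<^sub>v w) = p \<bullet> (K *\<^sub>v p)"
    unfolding Kw by (subst wpc, insert p c K cKx[OF p], simp add: add_scalar_prod_distrib[of _ "N*d"])
  have e3: "v \<bullet> w = v \<bullet> p" unfolding wpc using v p c vc by (simp add: scalar_prod_add_distrib[of _ "N*d"])
  have e4: "c \<bullet> (A *\<^sub>v w) = 0"
  proof -
    have "c \<bullet> (B *\<^sub>v w) = c \<bullet> (A *\<^sub>v w) + U * (c \<bullet> (K *\<^sub>v w))"
      unfolding Bx[OF w] using c w A K by (simp add: scalar_prod_add_distrib[of _ "N*d"])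
    moreover have "c \<bullet> (B *\<^sub>v w) = 0" unfolding Bw using comm_scalar_prod[OF c v] vc by simp
    ultimately show ?thesis using cKx[OF w] by simp
  qed
  have Aw: "A *\<^sub>v w = A *\<^sub>v p + A *\<^sub>v c" unfolding wpc using A p c
    by (simp add: mult_add_distrib_mat_vec[of _ "N*d" "N*d"])
  have e5: "w \<bullet> (A *\<^sub>v w) = p \<bullet> (A *\<^sub>v p) + p \<bullet> (A *\<^sub>v c)"
  proof -
    have "w \<bullet> (A *\<^sub>v w) = p \<bullet> (A *\<^sub>v w) + c \<bullet> (A *\<^sub>v w)"
      by (subst (1) wpc, insert p c A w, simp add: add_scalar_prod_distrib[of _ "N*d"])
    thus ?thesis using e4 unfolding Aw using p c A by (simp add: scalar_prod_add_distrib[of _ "N*d"])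
  qed
  have e6: "p \<bullet> (A *\<^sub>v c) = - (c \<bullet> (A *\<^sub>v c))"
  proof -
    have "0 = c \<bullet> (A *\<^sub>v p) + c \<bullet> (A *\<^sub>v c)" using e4 unfolding Aw using p c A
      by (simp add: scalar_prod_add_distrib[of _ "N*d"])
    moreover have "c \<bullet> (A *\<^sub>v p) = p \<bullet> (A *\<^sub>v c)"
      using symA[OF c p] comm_scalar_prod[of "A *\<^sub>v c" "N*d" p] A c p by simp
    ultimately show ?thesis by linarith
  qed
  have cAc: "0 \<le> c \<bullet> (A *\<^sub>v c)"
  proof -
    have "0 \<le> \<mu> * (c \<bullet> c)" using mu self_scalar_nonneg[of c] by simp
    thus ?thesis using Aq1[OF c] by linarith
  qed
  have wA_le: "w \<bullet> (A *\<^sub>v w) \<le> Lmax * (p \<bullet> p)" using e5 e6 cAc Aq2[OF p] by linarith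
  have wA_ge: "\<mu> * (w \<bullet> w) \<le> w \<bullet> (A *\<^sub>v w)" using Aq1[OF w] .
  have ww0: "0 \<le> w \<bullet> w" by (rule self_scalar_nonneg)
  have pp0: "0 \<le> p \<bullet> p" by (rule self_scalar_nonneg)
  have vv0: "0 \<le> v \<bullet> v" by (rule self_scalar_nonneg)
  have pK: "\<rho>2 * (p \<bullet> p) \<le> p \<bullet> (K *\<^sub>v p)" by (rule K1[OF p slp[unfolded ones_def]])
  define k where "k = U * \<rho>2"
  have k: "k > 0" unfolding k_def using U r0 by simp
  have kvp: "k * (p \<bullet> p) \<le> v \<bullet> p"
  proof -
    have "0 \<le> \<mu> * (w \<bullet> w)" using mu ww0 by simp
    hence "0 \<le> w \<bullet> (A *\<^sub>v w)" using wA_ge by linarith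
    moreover have "U * (\<rho>2 * (p \<bullet> p)) \<le> U * (p \<bullet> (K *\<^sub>v p))" using pK U by simp
    ultimately show ?thesis using e1 e2 e3 unfolding k_def by (simp add: mult.assoc)
  qed
  have kp: "k \<cdot>\<^sub>v p \<in> carrier_vec (N*d)" using p by simp
  have expand: "(v - k \<cdot>\<^sub>v p) \<bullet> (v - k \<cdot>\<^sub>v p) = v \<bullet> v - 2 * k * (v \<bullet> p) + k * k * (p \<bullet> p)"
  proof -
    have vmk: "v - k \<cdot>\<^sub>v p \<in> carrier_vec (N*d)" using v p by simp
    have "(v - k \<cdot>\<^sub>v p) \<bullet> (v - k \<cdot>\<^sub>v p) = v \<bullet> (v - k \<cdot>\<^sub>v p) - (k \<cdot>\<^sub>v p) \<bullet> (v - k \<cdot>\<^sub>v p)"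
      by (rule minus_scalar_prod_distrib[OF v kp vmk])
    also have "v \<bullet> (v - k \<cdot>\<^sub>v p) = v \<bullet> v - k * (v \<bullet> p)"
      using scalar_prod_minus_distrib[OF v v kp] v p by simp
    also have "(k \<cdot>\<^sub>v p) \<bullet> (v - k \<cdot>\<^sub>v p) = k * (p \<bullet> (v - k \<cdot>\<^sub>v p))"
      using p vmk by simp
    also have "p \<bullet> (v - k \<cdot>\<^sub>v p) = p \<bullet> v - k * (p \<bullet> p)"
      using scalar_prod_minus_distrib[OF p v kp] v p by simp
    also have "p \<bullet> v = v \<bullet> p" by (rule comm_scalar_prod[OF p v])
    finally show ?thesis by (simp add: algebra_simps)
  qed
  have "0 \<le> (v - k \<cdot>\<^sub>v p) \<bullet> (v - k \<cdot>\<^sub>v p)" by (rule self_scalar_nonneg)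
  moreover have "2 * k * (k * (p \<bullet> p)) \<le> 2 * k * (v \<bullet> p)" using kvp k by simp
  ultimately have kpp: "k^2 * (p \<bullet> p) \<le> v \<bullet> v" unfolding expand power2_eq_square
    by (simp add: algebra_simps)
  have "\<mu> * (w \<bullet> w) \<le> Lmax * (p \<bullet> p)" using wA_le wA_ge by linarith
  also have "\<dots> \<le> Lmax * ((v \<bullet> v) / k^2)" using kpp k muL mu
    by (intro mult_left_mono) (auto simp: field_simps)
  finally have h: "\<mu> * (w \<bullet> w) \<le> Lmax * ((v \<bullet> v) / k^2)" .
  have "w \<bullet> w = (\<mu> * (w \<bullet> w)) / \<mu>" using mu by simp
  also have "\<dots> \<le> Lmax * ((v \<bullet> v) / k^2) / \<mu>"
    by (rule divide_right_mono[OF h], use mu in simp)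
  also have "\<dots> = (Lmax / \<mu>) * ((v \<bullet> v) / k^2)" by simp
  also have "\<dots> \<le> (Lmax / \<mu>)^2 * ((v \<bullet> v) / k^2)"
  proof (rule mult_right_mono)
    define t where "t = Lmax / \<mu>"
    have t1: "1 \<le> t" unfolding t_def using mu muL by simp
    have "t * 1 \<le> t * t" using mult_left_mono[OF t1, of t] t1 by simp
    hence "t \<le> t^2" by (simp add: power2_eq_square)
    thus "Lmax / \<mu> \<le> (Lmax / \<mu>)^2" unfolding t_def .
  qed (use vv0 k in simp)
  also have "\<dots> = ((1 / U) * (Lmax / (\<mu> * \<rho>2)))^2 * (v \<bullet> v)"
    unfolding k_def using U r0 mu by (simp add: field_simps power2_eq_square)
  finally have ww: "w \<bullet> w \<le> ((1 / U) * (Lmax / (\<mu> * \<rho>2)))^2 * (v \<bullet> v)" .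
  have R0: "0 \<le> (1 / U) * (Lmax / (\<mu> * \<rho>2))" using U mu muL r0 by simp
  have "sqrt (w \<bullet> w) \<le> sqrt (((1 / U) * (Lmax / (\<mu> * \<rho>2)))^2 * (v \<bullet> v))"
    using ww by simp
  also have "\<dots> = (1 / U) * (Lmax / (\<mu> * \<rho>2)) * sqrt (v \<bullet> v)"
  proof -
    have "0 < U * (\<mu> * \<rho>2)" using U mu r0 by simp
    moreover have "0 \<le> Lmax" using mu muL by simp
    ultimately show ?thesis by (simp add: real_sqrt_mult)
  qed
  finally show ?thesis unfolding euclid_norm_def w_def using inv unfolding B_def K_def by simp
qed


end
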